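(* Let $F=(f_1,\dots,f_s)\subset\mathbb K[X]$ generate a zero-dimensional ideal $J$ with $d=\dim_{\mathbb K}\mathbb K[X]/J$, let $\mathcal B=\{b_1,\dots,b_d\}$ be any set of monomials whose classes form a basis of $\mathbb K[X]/J$ (not necessarily a standard basis), and let $a\neq1$ be a monomial. Let $T_a\in\mathbb K^{d\times d}$ be the matrix of multiplication by $a$ on $\mathbb K[X]/J$ in the basis $\mathcal B$, i.e. $[a b_i]=\sum_j t_{ij}[b_j]$, and put $V=a\,\mathbf b-T_a\mathbf b$, where $\mathbf b=(b_1,\dots,b_d)^\top$. Suppose $H\in\mathbb K[X]^{d\times s}$ satisfies $V=H\,(f_1,\dots,f_s)^\top$. For $k=1,\dots,s$ let $A_k$ be the set of monomials occurring in at least one entry of the $k$-th column of $H$, and $A=(A_1,\dots,A_s)$. Then the Macaulay matrix $M(A\cdot F)$ is an elimination template for $F$ with respect to $a$ (and $\mathcal B$).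
   Context: $[X]$ denotes the set of monomials in $X=\{x_1,\dots,x_k\}$. For a finite tuple of polynomials $P=(p_1,\dots,p_t)$, $[X]_P$ is the set of all monomials appearing in the $p_i$; if $[X]_P=\{m_1,\dots,m_n\}$, the Macaulay matrix $M(P)\in\mathbb K^{t\times n}$ has $(i,j)$ entry equal to the coefficient of $m_j$ in $p_i$. For $A=(A_1,\dots,A_s)$ with $A_j\subset[X]$ finite, the set of shifts is $A\cdot F=\{m f_j: m\in A_j,\ 1\le j\le s\}$. Given a monomial basis $\mathcal B$ of $\mathbb K[X]/\langle F\rangle$ (a set of monomials whose classes form a basis) and an action monomial $a$, set $\mathcal R=\{ab: b\in\mathcal B\}\setminus\mathcal B$ (reducible monomials), $\overline{\mathcal B}=\mathcal B\cap[X]_{A\cdot F}$ (basic monomials present), and $\mathcal E=[X]_{A\cdot F}\setminus(\mathcal R\cup\mathcal B)$ (excessive monomials). The Macaulay matrix $M(A\cdot F)$ with columns arranged in blocks $[\,M_{\mathcal E}\ M_{\mathcal R}\ M_{\overline{\mathcal B}}\,]$ is called an elimination template for $F$ with respect to $a$ if (1) $\mathcal R\subset[X]_{A\cdot F}$, and (2) its reduced row echelon form is $$\begin{bmatrix} * & 0 & * \\ 0 & I & \widetilde M_{\overline{\mathcal B}} \\ 0 & 0 & 0\end{bmatrix},$$ where $*$ denotes arbitrary submatrices, $0$ zero matrices of suitable sizes, $I$ the identity matrix of order $\#\mathcal R$, and $\widetilde M_{\overline{\mathcal B}}$ is a $\#\mathcal R\times\#\overline{\mathcal B}$ matrix (column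 blocks correspond to $\mathcal E$, $\mathcal R$, $\overline{\mathcal B}$). *)

theory Defs
  imports "HOL-Library.Poly_Mapping" "Jordan_Normal_Form.Gauss_Jordan_Elimination"
begin

text \<open>Monomials in the variables of type 'v are exponent vectors finitely supported maps from variables to nat
  (the monomial 1 is 0, multiplication of monomials is +); polynomials over 'k are
  finitely supported maps from monomials to coefficients, with the convolution product.\<close>

type_synonym 'v monom = "'v \<Rightarrow>\<^sub>0 nat"
type_synonym ('v, 'k) mpoly = "('v \<Rightarrow>\<^sub>0 nat) \<Rightarrow>\<^sub>0 'k"

definition mono :: "'v monom \<Rightarrow> ('v, 'k::zero_neq_one) mpoly" where
  "mono m = Poly_Mapping.single m 1"

definition gen_ideal :: "('v, 'k::comm_ring_1) mpoly list \<Rightarrow> ('v, 'k) mpoly set" where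
  "gen_ideal F = {p. \<exists>h. p = (\<Sum>i<length F. h i * F ! i)}"

definition is_monomial_basis :: "('v, 'k::field) mpoly set \<Rightarrow> 'v monom set \<Rightarrow> bool" where
  "is_monomial_basis J B \<longleftrightarrow> finite B \<and>
     (\<forall>p. \<exists>c. p - (\<Sum>b\<in>B. Poly_Mapping.single b (c b)) \<in> J) \<and>
     (\<forall>c. (\<Sum>b\<in>B. Poly_Mapping.single b (c b)) \<in> J \<longrightarrow> (\<forall>b\<in>B. c b = 0))"

definition is_mult_matrix ::
  "('v, 'k::field) mpoly set \<Rightarrow> 'v monom set \<Rightarrow> 'v monom \<Rightarrow> ('v monom \<Rightarrow> 'v monom \<Rightarrow> 'k) \<Rightarrow> bool" where
  "is_mult_matrix J B a T \<longleftrightarrow>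
     (\<forall>b\<in>B. mono (a + b) - (\<Sum>b'\<in>B. Poly_Mapping.single b' (T b b')) \<in> J)"

definition Vvec :: "'v monom set \<Rightarrow> 'v monom \<Rightarrow> ('v monom \<Rightarrow> 'v monom \<Rightarrow> 'k::field)
    \<Rightarrow> 'v monom \<Rightarrow> ('v, 'k) mpoly" where
  "Vvec B a T b = mono (a + b) - (\<Sum>b'\<in>B. Poly_Mapping.single b' (T b b'))"

definition shifts :: "(nat \<Rightarrow> 'v monom set) \<Rightarrow> ('v, 'k::field) mpoly list \<Rightarrow> ('v, 'k) mpoly set" where
  "shifts A F = {mono m * F ! j | m j. j < length F \<and> m \<in> A j}"

definition monoms_of :: "('v, 'k::zero) mpoly set \<Rightarrow> 'v monom set" where
  "monoms_of P = \<Union> (Poly_Mapping.keys ` P)"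

definition macaulay :: "('v, 'k::zero) mpoly list \<Rightarrow> 'v monom list \<Rightarrow> 'k mat" where
  "macaulay ps ms = mat (length ps) (length ms) (\<lambda>(i, j). Poly_Mapping.lookup (ps ! i) (ms ! j))"

text \<open>The block shape [[*,0,*],[0,I,*],[0,0,0]] with column blocks of sizes nE, nR, nB.\<close>
definition block_form :: "'k::{zero,one} mat \<Rightarrow> nat \<Rightarrow> nat \<Rightarrow> nat \<Rightarrow> bool" where
  "block_form M nE nR nB \<longleftrightarrow> dim_col M = nE + nR + nB \<and>
     (\<exists>k. k + nR \<le> dim_row M \<and>
        (\<forall>i<k. \<forall>j<nR. M $$ (i, nE + j) = 0) \<and>
        (\<forall>i<nR. (\<forall>j<nE. M $$ (k + i, j) = 0) \<and>
                 (\<forall>j<nR. M $$ (k + i, nE + j) = (if i = j then 1 else 0))) \<and>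
        (\<forall>i. k + nR \<le> i \<and> i < dim_row M \<longrightarrow> (\<forall>j<dim_col M. M $$ (i, j) = 0)))"

text \<open>The reduced row echelon form is the one computed by
  Gauss-Jordan elimination; the block condition is required for every ordering of
  the rows and of the columns within each block (it is independent of these orders).\<close>
definition elim_template ::
  "('v, 'k::field) mpoly list \<Rightarrow> 'v monom set \<Rightarrow> 'v monom \<Rightarrow> (nat \<Rightarrow> 'v monom set) \<Rightarrow> bool" where
  "elim_template F B a A \<longleftrightarrow>
     (let S = shifts A F;
          Ms = monoms_of S;
          R = (\<lambda>b. a + b) ` B - B;
          Bb = B \<inter> Ms;
          E = Ms - (R \<union> B)
      in (\<forall>j<length F. finite (A j)) \<and> R \<subseteq> Ms \<and>
         (\<forall>rows es rs bs. distinct rows \<and> set rows = S \<and>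
             distinct es \<and> set es = E \<and> distinct rs \<and> set rs = R \<and>
             distinct bs \<and> set bs = Bb \<longrightarrow>
             block_form (gauss_jordan_single (macaulay rows (es @ rs @ bs)))
               (length es) (length rs) (length bs)))"

end

theory Submission
  imports Defs
begin

definition lin :: "(nat \<Rightarrow> 'a::field) \<Rightarrow> 'a mat \<Rightarrow> nat \<Rightarrow> 'a" where
  "lin y M c = (\<Sum>i<dim_row M. y i * M $$ (i,c))"

lemma lin_transfer:
  fixes P M :: "'a::field mat"
  assumes P: "P \<in> carrier_mat nr nr" and M: "M \<in> carrier_mat nr nc" and c: "c < nc"
  shows "lin y (P * M) c = lin (\<lambda>k. \<Sum>i<nr. y i * P $$ (i,k)) M c"
proof -
  have "lin y (P * M) c = (\<Sum>i<nr. y i * (\<Sum>k<nr. P $$ (i,k) * M $$ (k,c)))"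
    unfolding lin_def using P M c
    by (intro sum.cong) (auto simp: scalar_prod_def atLeast0LessThan)
  also have "\<dots> = (\<Sum>i<nr. \<Sum>k<nr. y i * P $$ (i,k) * M $$ (k,c))"
    by (simp add: sum_distrib_left mult.assoc)
  also have "\<dots> = (\<Sum>k<nr. \<Sum>i<nr. y i * P $$ (i,k) * M $$ (k,c))"
    by (rule sum.swap)
  also have "\<dots> = lin (\<lambda>k. \<Sum>i<nr. y i * P $$ (i,k)) M c"
    unfolding lin_def using M by (simp add: sum_distrib_right)
  finally show ?thesis .
qed

lemma pivot_mono:
  assumes d: "dim_row C = nr" and pf: "pivot_fun C f nc"
  shows "i < i' \<Longrightarrow> i' < nr \<Longrightarrow> f i < f i' \<or> f i' = nc"
proof (induction i' arbitrary: i)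
  case 0 then show ?case by simp
next
  case (Suc i')
  note D = pivot_funD[OF d pf]
  have s: "f i' < f (Suc i') \<or> f (Suc i') = nc" using D(3)[of i'] Suc.prems by auto
  show ?case
  proof (cases "i = i'")
    case True then show ?thesis using s by simp
  next
    case False
    then have "i < i'" using Suc.prems by simp
    with Suc.IH[of i] Suc.prems have "f i < f i' \<or> f i' = nc" by simp
    moreover have "f (Suc i') \<le> nc" using D(1) Suc.prems by simp
    ultimately show ?thesis using s by auto
  qed
qed

lemma lin_pivot:
  assumes d: "dim_row C = nr" and pf: "pivot_fun C f nc" and i: "i < nr" and fi: "f i < nc"
  shows "lin y C (f i) = y i"
proof -
  note D = pivot_funD[OF d pf]
  have X: "\<forall>i'\<in>{..<nr}. y i' * C $$ (i', f i) = (if i' = i then y i else 0)"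
    using D(4)[OF i fi] D(5)[OF i fi] by auto
  have "lin y C (f i) = (\<Sum>i'<nr. if i' = i then y i else 0)"
    unfolding lin_def d by (rule sum.cong[OF refl]) (use X in blast)
  then show ?thesis using i by simp
qed

lemma lin_unit:
  assumes d: "dim_row C = nr" and i: "i < nr"
  shows "lin (\<lambda>i'. if i' = i then 1 else 0) C c = C $$ (i,c)"
proof -
  have "lin (\<lambda>i'. if i' = i then 1 else 0) C c = (\<Sum>i'<nr. if i' = i then C $$ (i,c) else 0)"
    unfolding lin_def d by (rule sum.cong) auto
  then show ?thesis using i by simp
qed

lemma lin_zero:
  assumes d: "dim_row C = nr" and pf: "pivot_fun C f nc" and c: "c < nc"
    and y: "\<forall>i<nr. f i < nc \<longrightarrow> y i = 0"
  shows "lin y C c = 0"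
proof -
  note D = pivot_funD[OF d pf]
  have "\<forall>i'\<in>{..<nr}. y i' * C $$ (i', c) = 0"
  proof
    fix i' assume "i' \<in> {..<nr}"
    then have i': "i' < nr" by simp
    show "y i' * C $$ (i', c) = 0"
    proof (cases "f i' < nc")
      case True then show ?thesis using y i' by simp
    next
      case False then have "f i' = nc" using D(1)[OF i'] by simp
      then show ?thesis using D(2)[OF i', of c] c by simp
    qed
  qed
  then show ?thesis unfolding lin_def d by (intro sum.neutral) auto
qed

lemma block_core:
  fixes C :: "'a::field mat"
  assumes C: "C \<in> carrier_mat nr (nE+nR+nB)" and pf: "pivot_fun C f (nE+nR+nB)"
    and a: "\<forall>j<nR. \<exists>y. \<forall>c<nE+nR. lin y C c = (if c = nE+j then 1 else 0)"
    and b: "\<forall>y. (\<forall>c<nE+nR. lin y C c = 0) \<longrightarrow> (\<forall>c<nE+nR+nB. lin y C c = 0)"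
  shows "block_form C nE nR nB"
proof -
  define nc where "nc = nE+nR+nB"
  have d: "dim_row C = nr" using C by simp
  have pf': "pivot_fun C f nc" using pf nc_def by simp
  note D = pivot_funD[OF d pf']
  note mono = pivot_mono[OF d pf']
  have range: "f i < nE+nR" if i: "i < nr" and fi: "f i < nc" for i
  proof (rule ccontr)
    assume "\<not> f i < nE+nR"
    define y where "y = (\<lambda>i'. if i' = i then (1::'a) else 0)"
    have "\<forall>c<nE+nR. lin y C c = 0"
      using lin_unit[OF d i] D(2)[OF i] \<open>\<not> f i < nE+nR\<close> unfolding y_def by auto
    then have "lin y C (f i) = 0" using b fi nc_def by auto
    moreover have "lin y C (f i) = 1" using lin_pivot[OF d pf' i fi] y_def by simp
    ultimately show False by simp
  qed
  have piv: "\<exists>i<nr. f i = nE+j" if j: "j < nR" for j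
  proof (rule ccontr)
    assume np: "\<not> (\<exists>i<nr. f i = nE+j)"
    obtain y where y: "\<forall>c<nE+nR. lin y C c = (if c = nE+j then 1 else 0)" using a j by blast
    have "\<forall>i<nr. f i < nc \<longrightarrow> y i = 0"
    proof (intro allI impI)
      fix i assume i: "i < nr" and fi: "f i < nc"
      have "y i = lin y C (f i)" using lin_pivot[OF d pf' i fi] by simp
      also have "\<dots> = 0" using y range[OF i fi] np i by auto
      finally show "y i = 0" .
    qed
    then have "lin y C (nE+j) = 0" using lin_zero[OF d pf', of "nE+j" y] j nc_def by simp
    then show False using y j by simp
  qed
  define k where "k = (LEAST i. nr \<le> i \<or> nE \<le> f i)"
  have k_le: "k \<le> nr" unfolding k_def by (rule Least_le) simp
  have below: "i < nr \<and> f i < nE" if "i < k" for i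
    using not_less_Least[OF that[unfolded k_def]] by auto
  have atk: "nE \<le> f k" if "k < nr"
    using LeastI[of "\<lambda>i. nr \<le> i \<or> nE \<le> f i" nr] that unfolding k_def[symmetric] by auto
  have above: "nE \<le> f i" if "k \<le> i" "i < nr" for i
  proof (cases "i = k")
    case True then show ?thesis using atk that by simp
  next
    case False
    then have "f k < f i \<or> f i = nc" using mono[of k i] that by simp
    then show ?thesis using atk that nc_def by auto
  qed
  have Rrows: "k + j < nr \<and> f (k+j) = nE + j" if "j < nR" for j
    using that
  proof (induction j)
    case 0
    obtain i0 where i0: "i0 < nr" "f i0 = nE" using piv[OF 0] by auto
    have "k \<le> i0" using below i0 by (meson leI less_irrefl)
    moreover have "\<not> k < i0"
    proof
      assume "k < i0"
      then have "f k < f i0 \<or> f i0 = nc" using mono[of k i0] i0 by simp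
      moreover have "nE \<le> f k" using atk \<open>k < i0\<close> i0 by simp
      ultimately show False using i0 nc_def 0 by auto
    qed
    ultimately have "i0 = k" by simp
    then show ?case using i0 by simp
  next
    case (Suc j)
    then have IH: "k + j < nr" "f (k+j) = nE + j" by auto
    obtain i1 where i1: "i1 < nr" "f i1 = nE + Suc j" using piv[OF Suc.prems] by auto
    have "\<not> i1 \<le> k + j"
    proof
      assume "i1 \<le> k + j"
      then consider "i1 = k + j" | "i1 < k + j" by linarith
      then show False
      proof cases
        case 1 then show False using i1 IH by simp
      next
        case 2 then have "f i1 < f (k+j) \<or> f (k+j) = nc" using mono[of i1 "k+j"] IH by simp
        then show False using i1 IH nc_def Suc.prems by auto
      qed
    qed
    then have lt: "k + j < i1" by simp
    have "\<not> k + Suc j < i1"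
    proof
      assume h: "k + Suc j < i1"
      then have "f (k + Suc j) < f i1 \<or> f i1 = nc" using mono[of "k + Suc j" i1] i1 by simp
      then have A: "f (k + Suc j) < nE + Suc j" using i1 nc_def Suc.prems by auto
      have "f (k+j) < f (k + Suc j) \<or> f (k + Suc j) = nc" using mono[of "k+j" "k+Suc j"] h i1 by simp
      then show False using A IH nc_def Suc.prems by auto
    qed
    then have "i1 = k + Suc j" using lt by simp
    then show ?case using i1 by simp
  qed
  have kR: "k + nR \<le> nr"
  proof (cases nR)
    case 0 then show ?thesis using k_le by simp
  next
    case (Suc n) then show ?thesis using Rrows[of n] by simp
  qed
  have zero_rows: "f i = nc" if "k + nR \<le> i" "i < nr" for i
  proof (rule ccontr)
    assume "f i \<noteq> nc"
    then have fi: "f i < nc" using D(1)[OF \<open>i < nr\<close>] by simp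
    have r: "f i < nE + nR" using range[OF \<open>i < nr\<close> fi] .
    show False
    proof (cases nR)
      case 0 then show False using above[of i] that r by simp
    next
      case (Suc n)
      then have "f (k+n) < f i \<or> f i = nc" using mono[of "k+n" i] that by simp
      then show False using Rrows[of n] Suc r fi by simp
    qed
  qed
  show ?thesis unfolding block_form_def
  proof (intro conjI exI[of _ k])
    show "dim_col C = nE + nR + nB" using C by simp
    show "k + nR \<le> dim_row C" using kR d by simp
    show "\<forall>i<k. \<forall>j<nR. C $$ (i, nE + j) = 0"
    proof (intro allI impI)
      fix i j assume "i < k" "j < nR"
      then show "C $$ (i, nE + j) = 0" using D(5)[of "k+j" i] Rrows[of j] nc_def by auto
    qed
    show "\<forall>i<nR. (\<forall>j<nE. C $$ (k + i, j) = 0) \<and>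
                 (\<forall>j<nR. C $$ (k + i, nE + j) = (if i = j then 1 else 0))"
    proof (intro allI impI conjI)
      fix i j assume "i < nR" "j < nE"
      then show "C $$ (k + i, j) = 0" using D(2)[of "k+i" j] Rrows[of i] by auto
    next
      fix i j assume "i < nR" "j < nR"
      then show "C $$ (k + i, nE + j) = (if i = j then 1 else 0)"
        using D(4)[of "k+i"] D(5)[of "k+j" "k+i"] Rrows[of i] Rrows[of j] nc_def by auto
    qed
    show "\<forall>i. k + nR \<le> i \<and> i < dim_row C \<longrightarrow> (\<forall>j<dim_col C. C $$ (i, j) = 0)"
    proof (intro allI impI)
      fix i j assume h: "k + nR \<le> i \<and> i < dim_row C" "j < dim_col C"
      then show "C $$ (i, j) = 0" using zero_rows[of i] D(2)[of i j] d C nc_def by auto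
    qed
  qed
qed

lemma gj_block:
  fixes M :: "'a::field mat"
  assumes M: "M \<in> carrier_mat nr (nE+nR+nB)"
    and a: "\<forall>j<nR. \<exists>y. \<forall>c<nE+nR. lin y M c = (if c = nE+j then 1 else 0)"
    and b: "\<forall>y. (\<forall>c<nE+nR. lin y M c = 0) \<longrightarrow> (\<forall>c<nE+nR+nB. lin y M c = 0)"
  shows "block_form (gauss_jordan_single M) nE nR nB"
proof -
  define C where "C = gauss_jordan_single M"
  note G = gauss_jordan_single[OF M C_def[symmetric]]
  obtain P Q where PQ: "C = P * M" "P \<in> carrier_mat nr nr" "Q \<in> carrier_mat nr nr"
    "P * Q = 1\<^sub>m nr" "Q * P = 1\<^sub>m nr" using G(4) by blast
  have C: "C \<in> carrier_mat nr (nE+nR+nB)" using G(2) .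
  obtain f where pf: "pivot_fun C f (dim_col C)" using G(3) unfolding row_echelon_form_def by blast
  have MQ: "M = Q * C"
  proof -
    have "Q * C = Q * (P * M)" using PQ by simp
    also have "\<dots> = (Q * P) * M" using PQ(2,3) M by (metis assoc_mult_mat)
    also have "\<dots> = M" using PQ M by simp
    finally show ?thesis by simp
  qed
  show ?thesis unfolding C_def[symmetric]
  proof (rule block_core[OF C])
    show "pivot_fun C f (nE + nR + nB)" using pf C by simp
    show "\<forall>j<nR. \<exists>y. \<forall>c<nE+nR. lin y C c = (if c = nE+j then 1 else 0)"
    proof (intro allI impI)
      fix j assume "j < nR"
      then obtain y where y: "\<forall>c<nE+nR. lin y M c = (if c = nE+j then 1 else 0)" using a by blast
      show "\<exists>y. \<forall>c<nE+nR. lin y C c = (if c = nE+j then 1 else 0)"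
      proof (intro exI allI impI)
        fix c assume c: "c < nE + nR"
        have "lin y M c = lin (\<lambda>k. \<Sum>i<nr. y i * Q $$ (i,k)) C c"
          using lin_transfer[OF PQ(3) C, of c y] c MQ by simp
        then show "lin (\<lambda>k. \<Sum>i<nr. y i * Q $$ (i,k)) C c = (if c = nE+j then 1 else 0)"
          using y c by simp
      qed
    qed
    show "\<forall>y. (\<forall>c<nE+nR. lin y C c = 0) \<longrightarrow> (\<forall>c<nE+nR+nB. lin y C c = 0)"
    proof (intro allI impI)
      fix y c assume h: "\<forall>c<nE+nR. lin y C c = 0" and c: "c < nE+nR+nB"
      define y' where "y' = (\<lambda>k. \<Sum>i<nr. y i * P $$ (i,k))"
      have tr: "lin y C c' = lin y' M c'" if "c' < nE+nR+nB" for c'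
        using lin_transfer[OF PQ(2) M that, of y] PQ(1) y'_def by simp
      have "\<forall>c<nE+nR. lin y' M c = 0" using h tr by simp
      then have "lin y' M c = 0" using b c by blast
      then show "lin y C c = 0" using tr[OF c] by simp
    qed
  qed
qed

definition sc :: "'k::field \<Rightarrow> ('v, 'k) mpoly \<Rightarrow> ('v, 'k) mpoly" where
  "sc c p = Poly_Mapping.single 0 c * p"

lemma lookup_sc: "Poly_Mapping.lookup (sc c p) m = c * Poly_Mapping.lookup p m"
  unfolding sc_def by (simp flip: mult_map_scale_conv_mult add: Poly_Mapping.map.rep_eq when_def)

lemma keys_sc: "Poly_Mapping.keys (sc c p) \<subseteq> Poly_Mapping.keys p"
  by (simp add: in_keys_iff lookup_sc subset_iff)

lemma sc_sc: "sc c (sc d p) = sc (c * d) p"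
  unfolding sc_def by (simp add: mult.assoc[symmetric] mult_single)

lemma sc_0: "sc 0 p = 0" unfolding sc_def by simp
lemma sc_1: "sc 1 p = p" unfolding sc_def by simp
lemma sc_add: "sc (c + d) p = sc c p + sc d p" unfolding sc_def by (simp add: single_add distrib_right)
lemma sc_mono: "sc c (mono m) = Poly_Mapping.single m c" unfolding sc_def mono_def by (simp add: mult_single)

definition span :: "('v, 'k::field) mpoly list \<Rightarrow> ('v, 'k) mpoly \<Rightarrow> bool" where
  "span rs p \<longleftrightarrow> (\<exists>y. p = (\<Sum>i<length rs. sc (y i) (rs ! i)))"

lemma span_zero: "span rs 0"
  unfolding span_def by (rule exI[of _ "\<lambda>_. 0"]) (simp add: sc_0)

lemma span_add: "span rs p \<Longrightarrow> span rs q \<Longrightarrow> span rs (p + q)"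
  unfolding span_def
proof (elim exE)
  fix y z assume "p = (\<Sum>i<length rs. sc (y i) (rs ! i))" "q = (\<Sum>i<length rs. sc (z i) (rs ! i))"
  then show "\<exists>w. p + q = (\<Sum>i<length rs. sc (w i) (rs ! i))"
    by (intro exI[of _ "\<lambda>i. y i + z i"]) (simp add: sc_add sum.distrib)
qed

lemma span_sc: "span rs p \<Longrightarrow> span rs (sc c p)"
  unfolding span_def
proof (elim exE)
  fix y assume "p = (\<Sum>i<length rs. sc (y i) (rs ! i))"
  then show "\<exists>w. sc c p = (\<Sum>i<length rs. sc (w i) (rs ! i))"
    by (intro exI[of _ "\<lambda>i. c * y i"]) (simp add: sc_def sum_distrib_left sc_sc[unfolded sc_def])
qed

lemma span_mem: assumes "x \<in> set rs" shows "span rs x"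
proof -
  obtain i where i: "i < length rs" "rs ! i = x" using assms by (auto simp: in_set_conv_nth)
  have "(\<Sum>j<length rs. sc (if j = i then 1 else 0) (rs ! j)) = (\<Sum>j<length rs. if j = i then x else 0)"
    by (rule sum.cong) (auto simp: sc_0 sc_1 i)
  also have "\<dots> = x" using i by simp
  finally show ?thesis unfolding span_def by (intro exI[of _ "\<lambda>j. if j = i then 1 else 0"]) simp
qed

lemma span_sum: "finite I \<Longrightarrow> (\<forall>i\<in>I. span rs (g i)) \<Longrightarrow> span rs (sum g I)"
  by (induction I rule: finite_induct) (auto intro: span_zero span_add)

lemma lookup_span_sum:
  "Poly_Mapping.lookup (\<Sum>i<n. sc (y i) (rs ! i)) m = (\<Sum>i<n. y i * Poly_Mapping.lookup (rs ! i) m)"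
  by (simp add: lookup_sum lookup_sc)

lemma span_keys: assumes "span rs p" shows "Poly_Mapping.keys p \<subseteq> \<Union> (Poly_Mapping.keys ` set rs)"
proof -
  obtain y where y: "p = (\<Sum>i<length rs. sc (y i) (rs ! i))" using assms span_def by blast
  have "Poly_Mapping.keys p \<subseteq> (\<Union>i<length rs. Poly_Mapping.keys (sc (y i) (rs ! i)))"
    unfolding y by (rule keys_sum)
  also have "\<dots> \<subseteq> \<Union> (Poly_Mapping.keys ` set rs)" using keys_sc by (fastforce simp: in_set_conv_nth)
  finally show ?thesis .
qed

lemma ideal_zero: "0 \<in> gen_ideal F"
  unfolding gen_ideal_def by (auto intro: exI[of _ "\<lambda>_. 0"])

lemma ideal_add: "p \<in> gen_ideal F \<Longrightarrow> q \<in> gen_ideal F \<Longrightarrow> p + q \<in> gen_ideal F"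
  unfolding gen_ideal_def
proof (clarify)
  fix h h' show "\<exists>h''. (\<Sum>i<length F. h i * F ! i) + (\<Sum>i<length F. h' i * F ! i) = (\<Sum>i<length F. h'' i * F ! i)"
    by (intro exI[of _ "\<lambda>i. h i + h' i"]) (simp add: sum.distrib distrib_right)
qed

lemma ideal_mult: "p \<in> gen_ideal F \<Longrightarrow> q * p \<in> gen_ideal F"
  unfolding gen_ideal_def
proof (clarify)
  fix h show "\<exists>h''. q * (\<Sum>i<length F. h i * F ! i) = (\<Sum>i<length F. h'' i * F ! i)"
    by (intro exI[of _ "\<lambda>i. q * h i"]) (simp add: sum_distrib_left mult.assoc)
qed

lemma ideal_sum: "finite I \<Longrightarrow> (\<forall>i\<in>I. g i \<in> gen_ideal F) \<Longrightarrow> sum g I \<in> gen_ideal F"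
  by (induction I rule: finite_induct) (auto intro: ideal_zero ideal_add)

lemma ideal_gen: assumes "j < length F" shows "q * F ! j \<in> gen_ideal F"
proof -
  have "(\<Sum>i<length F. (if i = j then q else 0) * F ! i) = (\<Sum>i<length F. if i = j then q * F ! j else 0)"
    by (rule sum.cong) auto
  also have "\<dots> = q * F ! j" using assms by simp
  finally show ?thesis unfolding gen_ideal_def by (intro CollectI exI[of _ "\<lambda>i. if i = j then q else 0"]) simp
qed

lemma span_ideal: assumes "set rs \<subseteq> gen_ideal F" "span rs p" shows "p \<in> gen_ideal F"
proof -
  obtain y where y: "p = (\<Sum>i<length rs. sc (y i) (rs ! i))" using assms span_def by blast
  show ?thesis unfolding y sc_def using assms(1)
    by (intro ideal_sum ballI ideal_mult) (auto simp: subset_iff)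
qed

lemma poly_expand:
  assumes "finite X" "Poly_Mapping.keys (p :: ('v,'k::field) mpoly) \<subseteq> X"
  shows "(\<Sum>b\<in>X. Poly_Mapping.single b (Poly_Mapping.lookup p b)) = p"
proof (rule poly_mapping_eqI)
  fix m
  have "Poly_Mapping.lookup (\<Sum>b\<in>X. Poly_Mapping.single b (Poly_Mapping.lookup p b)) m
      = (\<Sum>b\<in>X. if b = m then Poly_Mapping.lookup p m else 0)"
    by (simp add: lookup_sum lookup_single when_def) (rule sum.cong, auto)
  also have "\<dots> = Poly_Mapping.lookup p m" using assms by (auto simp: in_keys_iff)
  finally show "Poly_Mapping.lookup (\<Sum>b\<in>X. Poly_Mapping.single b (Poly_Mapping.lookup p b)) m = Poly_Mapping.lookup p m" .
qed

theorem mainTheorem2: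
  fixes F :: "('v, 'k::field) mpoly list"
    and B :: "'v monom set"
    and a :: "'v monom"
    and T :: "'v monom \<Rightarrow> 'v monom \<Rightarrow> 'k"
    and H :: "'v monom \<Rightarrow> nat \<Rightarrow> ('v, 'k) mpoly"
  assumes basis: "is_monomial_basis (gen_ideal F) B"
    and a_ne_1: "a \<noteq> 0"
    and mult: "is_mult_matrix (gen_ideal F) B a T"
    and H: "\<forall>b\<in>B. Vvec B a T b = (\<Sum>k<length F. H b k * F ! k)"
  shows "elim_template F B a (\<lambda>k. \<Union>b\<in>B. Poly_Mapping.keys (H b k))"
proof -
  define A where "A = (\<lambda>k. \<Union>b\<in>B. Poly_Mapping.keys (H b k))"
  define S where "S = (shifts A F :: ('v, 'k) mpoly set)"
  define Ms where "Ms = monoms_of S"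
  define R where "R = (\<lambda>b. a + b) ` B - B"
  define Bb where "Bb = B \<inter> Ms"
  define E where "E = Ms - (R \<union> B)"
  have finB: "finite B" using basis unfolding is_monomial_basis_def by simp
  have finA: "\<forall>j<length F. finite (A j)" unfolding A_def using finB by simp
  have S_sub: "S \<subseteq> (\<lambda>(j,m). mono m * F ! j) ` (SIGMA j:{..<length F}. A j)"
    unfolding S_def shifts_def by auto
  have finS: "finite S"
    by (rule finite_subset[OF S_sub]) (use finA in auto)
  have S_ideal: "S \<subseteq> gen_ideal F"
    unfolding S_def shifts_def using ideal_gen by blast
  have Vspan: "span rs (Vvec B a T b)" if rs: "set rs = S" and b: "b \<in> B" for rs b
  proof -
    have "Vvec B a T b = (\<Sum>k<length F. H b k * F ! k)" using H b by simp
    also have "\<dots> = (\<Sum>k<length F. \<Sum>m\<in>Poly_Mapping.keys (H b k).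
        sc (Poly_Mapping.lookup (H b k) m) (mono m * F ! k))"
    proof (rule sum.cong[OF refl])
      fix k
      have "H b k = (\<Sum>m\<in>Poly_Mapping.keys (H b k). sc (Poly_Mapping.lookup (H b k) m) (mono m))"
        using poly_expand[of "Poly_Mapping.keys (H b k)" "H b k"] by (simp add: sc_mono)
      then have "H b k * F ! k = (\<Sum>m\<in>Poly_Mapping.keys (H b k). sc (Poly_Mapping.lookup (H b k) m) (mono m)) * F ! k"
        by simp
      also have "\<dots> = (\<Sum>m\<in>Poly_Mapping.keys (H b k). sc (Poly_Mapping.lookup (H b k) m) (mono m * F ! k))"
        by (simp add: sum_distrib_right sc_def mult.assoc)
      finally show "H b k * F ! k = \<dots>" .
    qed
    finally have V: "Vvec B a T b = \<dots>" .
    show ?thesis unfolding V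
    proof (rule span_sum[OF finite_lessThan], rule ballI, rule span_sum[OF finite_keys], rule ballI, rule span_sc, rule span_mem)
      fix k m assume "k \<in> {..<length F}" "m \<in> Poly_Mapping.keys (H b k)"
      then show "mono m * F ! k \<in> set rs" unfolding rs S_def shifts_def A_def using b by blast
    qed
  qed
  have lookupV: "Poly_Mapping.lookup (Vvec B a T b) m =
      (if m = a + b then 1 else 0) - (if m \<in> B then T b m else 0)" for b m
  proof -
    have "Poly_Mapping.lookup (\<Sum>b'\<in>B. Poly_Mapping.single b' (T b b')) m = (\<Sum>b'\<in>B. if b' = m then T b m else 0)"
      by (simp add: lookup_sum lookup_single when_def) (rule sum.cong, auto)
    also have "\<dots> = (if m \<in> B then T b m else 0)" using finB by simp
    finally show ?thesis unfolding Vvec_def mono_def by (simp add: lookup_minus lookup_single when_def)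
  qed
  obtain rows0 where rows0: "set rows0 = S" using finite_list[OF finS] by blast
  have keys_span: "Poly_Mapping.keys p \<subseteq> Ms" if "set rs = S" "span rs p" for rs p
    using span_keys[OF that(2)] that(1) unfolding Ms_def monoms_of_def by simp
  have Rsub: "R \<subseteq> Ms"
  proof
    fix r assume "r \<in> R"
    then obtain b where b: "b \<in> B" "r = a + b" "r \<notin> B" unfolding R_def by auto
    have "Poly_Mapping.lookup (Vvec B a T b) r = 1" using lookupV b by simp
    then have "r \<in> Poly_Mapping.keys (Vvec B a T b)" by (simp add: in_keys_iff)
    then show "r \<in> Ms" using keys_span[OF rows0 Vspan[OF rows0 b(1)]] by blast
  qed
  show ?thesis
    unfolding elim_template_def Let_def A_def[symmetric] S_def[symmetric] Ms_def[symmetric]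
      R_def[symmetric] Bb_def[symmetric] E_def[symmetric]
  proof (rule conjI[OF finA conjI[OF Rsub]], intro allI impI)
    fix rows es rs bs
    assume asm: "distinct rows \<and> set rows = S \<and> distinct es \<and> set es = E \<and>
      distinct rs \<and> set rs = R \<and> distinct bs \<and> set bs = Bb"
    define ms where "ms = es @ rs @ bs"
    define M where "M = macaulay rows ms"
    define nr where "nr = length rows"
    have M: "M \<in> carrier_mat nr (length es + length rs + length bs)"
      unfolding M_def macaulay_def nr_def ms_def by (simp add: add.assoc)
    have linM: "lin y M c = Poly_Mapping.lookup (\<Sum>i<nr. sc (y i) (rows ! i)) (ms ! c)"
      if "c < length ms" for y c
      unfolding lin_def lookup_span_sum using that M
      by (intro sum.cong) (auto simp: M_def macaulay_def nr_def)
    have spanP: "span rows (\<Sum>i<nr. sc (y i) (rows ! i))" for y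
      unfolding span_def nr_def by blast
    have ms1: "ms ! c = es ! c" if "c < length es" for c
      using that unfolding ms_def by (simp add: nth_append)
    have ms2: "ms ! (length es + j) = rs ! j" if "j < length rs" for j
      using that unfolding ms_def by (simp add: nth_append)
    show "block_form (gauss_jordan_single (macaulay rows (es @ rs @ bs))) (length es) (length rs) (length bs)"
      unfolding ms_def[symmetric] M_def[symmetric]
    proof (rule gj_block[OF M])
      show "\<forall>j<length rs. \<exists>y. \<forall>c<length es + length rs. lin y M c = (if c = length es + j then 1 else 0)"
      proof (intro allI impI)
        fix j assume j: "j < length rs"
        then have "rs ! j \<in> R" using asm by auto
        then obtain b where b: "b \<in> B" "rs ! j = a + b" "rs ! j \<notin> B" unfolding R_def by auto
        obtain y where y: "Vvec B a T b = (\<Sum>i<nr. sc (y i) (rows ! i))"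
          using Vspan[of rows b] asm b unfolding span_def nr_def by blast
        show "\<exists>y. \<forall>c<length es + length rs. lin y M c = (if c = length es + j then 1 else 0)"
        proof (intro exI allI impI)
          fix c assume c: "c < length es + length rs"
          have lc: "lin y M c = Poly_Mapping.lookup (Vvec B a T b) (ms ! c)"
            using linM[of c y] c y unfolding ms_def by simp
          show "lin y M c = (if c = length es + j then 1 else 0)"
          proof (cases "c < length es")
            case True
            then have "es ! c \<in> E" using asm by auto
            then have "es ! c \<notin> R" "es ! c \<notin> B" unfolding E_def by auto
            then have "es ! c \<noteq> a + b" using \<open>rs ! j \<in> R\<close> b by auto
            then show ?thesis using lc ms1[OF True] lookupV \<open>es ! c \<notin> B\<close> True by simp
          next
            case False
            define j' where "j' = c - length es"
            have j': "j' < length rs" "c = length es + j'" using c False j'_def by auto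
            have "rs ! j' \<in> R" using asm j' by auto
            then have nb: "rs ! j' \<notin> B" unfolding R_def by auto
            have "(rs ! j' = rs ! j) = (j' = j)"
              using nth_eq_iff_index_eq[of rs j' j] asm j j' by simp
            then have "(rs ! j' = a + b) = (j' = j)" using b(2) by simp
            then show ?thesis using lc ms2[OF j'(1)] j'(2) lookupV nb by simp
          qed
        qed
      qed
      show "\<forall>y. (\<forall>c<length es + length rs. lin y M c = 0) \<longrightarrow>
          (\<forall>c<length es + length rs + length bs. lin y M c = 0)"
      proof (intro allI impI)
        fix y c
        assume h: "\<forall>c<length es + length rs. lin y M c = 0" and c: "c < length es + length rs + length bs"
        define p where "p = (\<Sum>i<nr. sc (y i) (rows ! i))"
        have sp: "span rows p" unfolding p_def by (rule spanP)
        have kp: "Poly_Mapping.keys p \<subseteq> Ms" using keys_span[of rows p] asm sp by simp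
        have zE: "Poly_Mapping.lookup p m = 0" if "m \<in> E" for m
        proof -
          have "m \<in> set es" using that asm by simp
          then obtain c' where c': "c' < length es" "es ! c' = m" by (auto simp: in_set_conv_nth)
          have "lin y M c' = 0" using h c' by simp
          moreover have "lin y M c' = Poly_Mapping.lookup p (ms ! c')"
            using linM[of c' y] c' p_def unfolding ms_def by simp
          ultimately show ?thesis using ms1[OF c'(1)] c'(2) by simp
        qed
        have zR: "Poly_Mapping.lookup p m = 0" if "m \<in> R" for m
        proof -
          have "m \<in> set rs" using that asm by simp
          then obtain j where j: "j < length rs" "rs ! j = m" by (auto simp: in_set_conv_nth)
          have "lin y M (length es + j) = 0" using h j by simp
          moreover have "lin y M (length es + j) = Poly_Mapping.lookup p (ms ! (length es + j))"
            using linM[of "length es + j" y] j p_def unfolding ms_def by simp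
          ultimately show ?thesis using ms2[OF j(1)] j(2) by simp
        qed
        have kB: "Poly_Mapping.keys p \<subseteq> B"
        proof
          fix m assume m: "m \<in> Poly_Mapping.keys p"
          then have "Poly_Mapping.lookup p m \<noteq> 0" by (simp add: in_keys_iff)
          then have "m \<notin> E" "m \<notin> R" using zE zR by auto
          then show "m \<in> B" using kp m unfolding E_def by auto
        qed
        have pI: "p \<in> gen_ideal F" using span_ideal[of rows F p] asm S_ideal sp by simp
        have X: "(\<Sum>b\<in>B. Poly_Mapping.single b (Poly_Mapping.lookup p b)) \<in> gen_ideal F"
          using poly_expand[OF finB kB] pI by simp
        have indep: "\<forall>c. (\<Sum>b\<in>B. Poly_Mapping.single b (c b)) \<in> gen_ideal F \<longrightarrow> (\<forall>b\<in>B. c b = 0)"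
          using basis unfolding is_monomial_basis_def by simp
        have "(\<Sum>b\<in>B. Poly_Mapping.single b (Poly_Mapping.lookup p b)) \<in> gen_ideal F \<longrightarrow> (\<forall>b\<in>B. Poly_Mapping.lookup p b = 0)"
          using indep by (rule spec)
        then have "\<forall>b\<in>B. Poly_Mapping.lookup p b = 0" using X by (rule mp)
        then have "p = 0"
        proof (intro poly_mapping_eqI)
          fix m assume z: "\<forall>b\<in>B. Poly_Mapping.lookup p b = 0"
          show "Poly_Mapping.lookup p m = Poly_Mapping.lookup 0 m"
          proof (cases "m \<in> Poly_Mapping.keys p")
            case True then show ?thesis using kB z by auto
          next
            case False then show ?thesis by (simp add: in_keys_iff)
          qed
        qed
        moreover have "lin y M c = Poly_Mapping.lookup p (ms ! c)"
          using linM[of c y] c unfolding p_def ms_def by simp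
        ultimately show "lin y M c = 0" by simp
      qed
    qed
  qed
qed

end
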